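(* Let $m,n$ be integers with $m\ge 3$ and $n\ge 2$. Then the set $E(m,n)=\{k \mid \text{there exists a primitive nonnegative tensor } \mathbb{A} \text{ of order } m \text{ and dimension } n \text{ with } \gamma(\mathbb{A})=k\}$ equals $\{1,2,\ldots,(n-1)^2+1\}$.
   Context: A tensor $\mathbb{A}=(a_{i_1i_2\ldots i_m})$ of order $m$ and dimension $n$ is an array with entries indexed by $i_1,\ldots,i_m\in[n]=\{1,\ldots,n\}$; it is nonnegative if all entries are real and $\ge 0$. For $x\in\mathbb{R}^n$, $\mathbb{A}x\in\mathbb{R}^n$ is the vector with $(\mathbb{A}x)_i=\sum_{i_2,\ldots,i_m=1}^n a_{ii_2\ldots i_m}x_{i_2}\cdots x_{i_m}$, and $x^{[r]}=(x_1^r,\ldots,x_n^r)^T$. Define $T_{\mathbb{A}}(x)=(\mathbb{A}x)^{[1/(m-1)]}$. A nonnegative tensor $\mathbb{A}$ is primitive if there is a positive integer $r$ such that $T_{\mathbb{A}}^r(x)>0$ (entrywise) for every nonnegative nonzero $x\in\mathbb{R}^n$; the smallest such $r$ is the primitive degree $\gamma(\mathbb{A})$. *)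

theory Defs
  imports Complex_Main
begin

text \<open>Indices are 0-based: [n] is rendered as {0..<n}. A tensor of order m and
dimension n is a function on index lists; only lists of length m with entries < n matter.
Vectors in R^n are functions nat => real, only entries i < n matter.\<close>

definition index_tuples :: "nat \<Rightarrow> nat \<Rightarrow> nat list set" where
  "index_tuples k n = {is. length is = k \<and> set is \<subseteq> {..<n}}"

definition nonneg_tensor :: "nat \<Rightarrow> nat \<Rightarrow> (nat list \<Rightarrow> real) \<Rightarrow> bool" where
  "nonneg_tensor m n A \<longleftrightarrow> (\<forall>is \<in> index_tuples m n. A is \<ge> 0)"

definition tensor_apply :: "nat \<Rightarrow> nat \<Rightarrow> (nat list \<Rightarrow> real) \<Rightarrow> (nat \<Rightarrow> real) \<Rightarrow> (nat \<Rightarrow> real)" where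
  "tensor_apply m n A x = (\<lambda>i. if i < n then
      (\<Sum>is \<in> index_tuples (m - 1) n. A (i # is) * prod_list (map x is)) else 0)"

definition T_map :: "nat \<Rightarrow> nat \<Rightarrow> (nat list \<Rightarrow> real) \<Rightarrow> (nat \<Rightarrow> real) \<Rightarrow> (nat \<Rightarrow> real)" where
  "T_map m n A x = (\<lambda>i. root (m - 1) (tensor_apply m n A x i))"

definition nonneg_nonzero_vec :: "nat \<Rightarrow> (nat \<Rightarrow> real) \<Rightarrow> bool" where
  "nonneg_nonzero_vec n x \<longleftrightarrow> (\<forall>i<n. x i \<ge> 0) \<and> (\<exists>i<n. x i \<noteq> 0)"

definition primitive_at :: "nat \<Rightarrow> nat \<Rightarrow> (nat list \<Rightarrow> real) \<Rightarrow> nat \<Rightarrow> bool" where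
  "primitive_at m n A r \<longleftrightarrow> 0 < r \<and>
     (\<forall>x. nonneg_nonzero_vec n x \<longrightarrow> (\<forall>i<n. ((T_map m n A) ^^ r) x i > 0))"

definition primitive_tensor :: "nat \<Rightarrow> nat \<Rightarrow> (nat list \<Rightarrow> real) \<Rightarrow> bool" where
  "primitive_tensor m n A \<longleftrightarrow> nonneg_tensor m n A \<and> (\<exists>r. primitive_at m n A r)"

definition primitive_degree :: "nat \<Rightarrow> nat \<Rightarrow> (nat list \<Rightarrow> real) \<Rightarrow> nat" where
  "primitive_degree m n A = (LEAST r. primitive_at m n A r)"

definition E_set :: "nat \<Rightarrow> nat \<Rightarrow> nat set" where
  "E_set m n = {k. \<exists>A. primitive_tensor m n A \<and> primitive_degree m n A = k}"

end

theory Submission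
  imports Defs
begin

definition monoF :: "(nat set \<Rightarrow> nat set) \<Rightarrow> bool" where
  "monoF F \<longleftrightarrow> (\<forall>S T. S \<subseteq> T \<longrightarrow> F S \<subseteq> F T)"

lemma monoF_funpow: "monoF F \<Longrightarrow> monoF (F ^^ k)"
  by (induction k) (auto simp: monoF_def)

lemma monoD': "monoF F \<Longrightarrow> S \<subseteq> T \<Longrightarrow> F S \<subseteq> F T"
  by (auto simp: monoF_def)

lemma reach_trans:
  assumes "monoF F" "u \<in> (F ^^ a) {v}" "z \<in> (F ^^ b) {u}"
  shows "z \<in> (F ^^ (b + a)) {v}"
proof -
  have "(F ^^ b) {u} \<subseteq> (F ^^ b) ((F ^^ a) {v})"
    using assms by (intro monoD'[OF monoF_funpow]) auto
  thus ?thesis using assms(3) by (auto simp: funpow_add)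
qed

lemma arith_bound:
  fixes a c n :: nat
  assumes "1 \<le> c" "c \<le> n - 1" "a + c \<le> n" "n \<ge> 2"
  shows "(n - 1) * c + a \<le> (n - 1)^2 + 1"
proof -
  have "(n - 2) * c \<le> (n - 2) * (n - 1)" using assms by (intro mult_le_mono2) simp
  moreover have "(n - 1) * c = (n - 2) * c + c" using assms
    by (metis Suc_diff_Suc Suc_1 add.commute diff_Suc_1 less_le_trans mult_Suc one_less_numeral_iff semiring_norm(76))
  moreover have "(n - 1)^2 + 1 = (n - 2) * (n - 1) + n" using assms
    by (cases n; cases "n - 1") (auto simp: power2_eq_square algebra_simps)
  ultimately show ?thesis using assms by linarith
qed

locale prim =
  fixes F :: "nat set \<Rightarrow> nat set" and n r :: nat
  assumes mono: "monoF F" and empty: "F {} = {}" and bounded: "\<And>S. F S \<subseteq> {..<n}"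
    and n2: "n \<ge> 2" and rpos: "r > 0"
    and prim: "\<And>S. S \<noteq> {} \<Longrightarrow> S \<subseteq> {..<n} \<Longrightarrow> (F ^^ r) S = {..<n}"
begin

lemma funpow_empty: "(F ^^ k) {} = {}"
  by (induction k) (auto simp: empty)

lemma funpow_bounded: "S \<subseteq> {..<n} \<Longrightarrow> (F ^^ k) S \<subseteq> {..<n}"
  by (cases k) (auto simp: bounded)

lemma sing_ne: assumes "x < n" shows "F {x} \<noteq> {}"
proof
  assume h: "F {x} = {}"
  obtain k where k: "r = Suc k" using rpos by (cases r) auto
  have "(F ^^ r) {x} = (F ^^ k) (F {x})" by (simp add: k funpow_Suc_right del: funpow.simps)
  also have "\<dots> = {}" by (simp add: h funpow_empty)
  finally show False using prim[of "{x}"] assms by auto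
qed

lemma full_fix: "F {..<n} = {..<n}"
proof -
  have "(F ^^ Suc r) {0} = F ((F ^^ r) {0})" by simp
  also have "\<dots> = F {..<n}" using prim[of "{0}"] n2 by auto
  finally have 1: "(F ^^ Suc r) {0} = F {..<n}" .
  have "(F ^^ Suc r) {0} = (F ^^ r) (F {0})" by (simp add: funpow_Suc_right del: funpow.simps)
  also have "\<dots> = {..<n}" using prim[of "F {0}"] sing_ne[of 0] n2 bounded by auto
  finally show ?thesis using 1 by simp
qed

lemma full_stable: "(F ^^ k) {..<n} = {..<n}"
  by (induction k) (auto simp: full_fix)

lemma full_after:
  assumes "(F ^^ a) S = {..<n}" "a \<le> b" shows "(F ^^ b) S = {..<n}"
proof -
  have "b = (b - a) + a" using assms by simp
  hence "(F ^^ b) S = (F ^^ (b - a)) ((F ^^ a) S)" by (metis comp_apply funpow_add)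
  thus ?thesis using assms full_stable by simp
qed

lemma stuck_full:
  assumes "T \<noteq> {}" "T \<subseteq> {..<n}" "c \<ge> 1" "(F ^^ c) T = T"
  shows "T = {..<n}"
proof -
  have q: "((F ^^ c) ^^ q) T = T" for q by (induction q) (auto simp: assms(4))
  have "(F ^^ (c * r)) T = T" using q[of r] by (simp add: funpow_mult)
  moreover have "(F ^^ (c * r)) T = {..<n}"
    using full_after[of r T "c*r"] prim[OF assms(1,2)] assms(3) by simp
  ultimately show ?thesis by simp
qed

lemma chain_full:
  assumes y: "y < n" and c: "c \<ge> 1" and ret: "y \<in> (F ^^ c) {y}"
  shows "(F ^^ ((n - 1) * c)) {y} = {..<n}"
proof -
  define G where "G = F ^^ c"
  have monoG: "monoF (G ^^ k)" for k unfolding G_def by (intro monoF_funpow mono)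
  have Gfull: "G {..<n} = {..<n}" unfolding G_def by (rule full_stable)
  have Gb: "(G ^^ k) {y} \<subseteq> {..<n}" for k
  proof (induction k)
    case 0 then show ?case using y by simp
  next
    case (Suc k) then show ?case unfolding G_def using funpow_bounded by simp
  qed
  have step: "(G ^^ k) {y} \<subseteq> (G ^^ Suc k) {y}" for k
  proof -
    have "(G ^^ k) {y} \<subseteq> (G ^^ k) (G {y})"
      using monoD'[OF monoG, of "{y}" "G {y}"] ret unfolding G_def by auto
    thus ?thesis by (simp add: funpow_Suc_right del: funpow.simps)
  qed
  have yin: "y \<in> (G ^^ k) {y}" for k
  proof (induction k)
    case 0 then show ?case by simp
  next
    case (Suc k) then show ?case using step[of k] by auto
  qed
  have main: "(G ^^ k) {y} = {..<n} \<or> card ((G ^^ k) {y}) \<ge> Suc k" for k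
  proof (induction k)
    case 0 then show ?case by simp
  next
    case (Suc k)
    show ?case
    proof (cases "(G ^^ k) {y} = {..<n}")
      case True then show ?thesis by (simp add: Gfull)
    next
      case False
      with Suc have ck: "card ((G ^^ k) {y}) \<ge> Suc k" by simp
      have ne: "(G ^^ Suc k) {y} \<noteq> (G ^^ k) {y}"
      proof
        assume eq: "(G ^^ Suc k) {y} = (G ^^ k) {y}"
        have "(F ^^ c) ((G ^^ k) {y}) = (G ^^ k) {y}" using eq by (simp add: G_def)
        hence "(G ^^ k) {y} = {..<n}" using stuck_full[of "(G ^^ k) {y}" c] yin Gb c by blast
        with False show False ..
      qed
      hence "(G ^^ k) {y} \<subset> (G ^^ Suc k) {y}" using step[of k] by auto
      hence "card ((G ^^ k) {y}) < card ((G ^^ Suc k) {y})"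
        using Gb[of "Suc k"] by (intro psubset_card_mono) (auto intro: finite_subset)
      with ck show ?thesis by simp
    qed
  qed
  have "(G ^^ (n - 1)) {y} = {..<n}"
  proof -
    from main[of "n - 1"] show ?thesis
    proof
      assume "card ((G ^^ (n - 1)) {y}) \<ge> Suc (n - 1)"
      hence "card ((G ^^ (n - 1)) {y}) \<ge> card {..<n::nat}" using n2 by simp
      thus ?thesis using Gb[of "n-1"] card_mono[OF finite_lessThan Gb[of "n-1"]]
        by (intro card_subset_eq) auto
    qed
  qed
  thus ?thesis by (simp add: G_def funpow_mult mult.commute)
qed

lemma sing_step: assumes "u \<in> (F ^^ d) {v}" "z \<in> F {u}" shows "z \<in> (F ^^ Suc d) {v}"
  using reach_trans[OF mono assms(1), of z 1] assms(2) by simp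

lemma walk_exists:
  assumes j: "j < n"
  shows "\<exists>a c y. y \<in> (F ^^ a) {j} \<and> y < n \<and> 1 \<le> c \<and> c \<le> n - 1 \<and> a + c \<le> n \<and> y \<in> (F ^^ c) {y}"
proof -
  define w where "w = rec_nat j (\<lambda>t z. SOME z'. z' \<in> F {z})"
  have w0: "w 0 = j" by (simp add: w_def)
  have wS: "w (Suc t) = (SOME z'. z' \<in> F {w t})" for t by (simp add: w_def)
  have wprop: "w t < n \<and> w (Suc t) \<in> F {w t}" for t
  proof (induction t)
    case 0
    have "\<exists>z. z \<in> F {j}" using sing_ne[OF j] by auto
    hence "w 1 \<in> F {w 0}" unfolding wS w0 One_nat_def by (rule someI_ex)
    thus ?case using j w0 by simp
  next
    case (Suc t)
    hence lt: "w (Suc t) < n" using bounded by auto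
    have "\<exists>z. z \<in> F {w (Suc t)}" using sing_ne[OF lt] by auto
    hence "w (Suc (Suc t)) \<in> F {w (Suc t)}" unfolding wS[of "Suc t"] by (rule someI_ex)
    thus ?case using lt by simp
  qed
  have wlt: "w t < n" for t using wprop by simp
  have wstep: "w (Suc t) \<in> F {w t}" for t using wprop by simp
  have path: "k \<le> l \<Longrightarrow> w l \<in> (F ^^ (l - k)) {w k}" for k l
  proof (induction l)
    case 0 then show ?case by simp
  next
    case (Suc l)
    show ?case
    proof (cases "k = Suc l")
      case True then show ?thesis by simp
    next
      case False
      hence "k \<le> l" using Suc by simp
      hence "w (Suc l) \<in> (F ^^ Suc (l - k)) {w k}" using sing_step[OF Suc.IH[OF \<open>k \<le> l\<close>] wstep[of l]] by simp
      moreover have "Suc (l - k) = Suc l - k" using \<open>k \<le> l\<close> by simp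
      ultimately show ?thesis by simp
    qed
  qed
  have fromj: "w l \<in> (F ^^ l) {j}" for l using path[of 0 l] w0 by simp
  show ?thesis
  proof (cases "inj_on w {..<n}")
    case False
    then obtain a b where ab: "a < n" "b < n" "a \<noteq> b" "w a = w b" unfolding inj_on_def by auto
    then obtain a b where ab: "a < b" "b < n" "w a = w b"
      by (metis linorder_neqE_nat)
    show ?thesis
      apply (rule exI[of _ a], rule exI[of _ "b - a"], rule exI[of _ "w a"])
      using ab fromj[of a] path[of a b] wlt[of a] by auto
  next
    case True
    have img: "w ` {..<n} = {..<n}"
      using True wlt by (intro card_subset_eq) (auto simp: card_image)
    have surj: "\<exists>k<n. x = w k" if "x < n" for x using img that by auto
    show ?thesis
    proof (cases "\<exists>z \<in> F {w (n - 1)}. z \<noteq> j")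
      case True
      then obtain z where z: "z \<in> F {w (n - 1)}" "z \<noteq> j" by auto
      then obtain k where k: "k < n" "z = w k" using surj[of z] bounded[of "{w (n - 1)}"] by blast
      have k0: "k \<noteq> 0" using k z w0 by (metis)
      have pf1: "w (n - 1) \<in> (F ^^ (n - 1 - k)) {w k}" using path[of k "n - 1"] k by simp
      have pf1b: "w k \<in> (F ^^ Suc (n - 1 - k)) {w k}" using sing_step[OF pf1 z(1)] k(2) by simp
      have eqk: "Suc (n - 1 - k) = n - k" using k by simp
      have "w k \<in> (F ^^ (n - k)) {w k}" using pf1b unfolding eqk .
      moreover have "1 \<le> n - k" "n - k \<le> n - 1" "k + (n - k) \<le> n" using k k0 by linarith+
      ultimately show ?thesis using fromj[of k] wlt[of k] by blast
    next
      case False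
      hence jin: "j \<in> F {w (n - 1)}" and allj: "\<forall>z\<in>F {w (n - 1)}. z = j"
        using sing_ne[OF wlt[of "n - 1"]] by auto
      show ?thesis
      proof (cases "\<exists>t < n - 1. \<exists>z \<in> F {w t}. z \<noteq> w (Suc t)")
        case True
        then obtain t z where tz: "t < n - 1" "z \<in> F {w t}" "z \<noteq> w (Suc t)" by auto
        then obtain k where k: "k < n" "z = w k" using surj[of z] bounded[of "{w t}"] by blast
        show ?thesis
        proof (cases "k \<le> t")
          case True
          have pf2: "w t \<in> (F ^^ (t - k)) {w k}" using path True by simp
          have "w k \<in> (F ^^ Suc (t - k)) {w k}" using sing_step[OF pf2 tz(2)] k(2) by simp
          moreover have "1 \<le> Suc (t - k)" "Suc (t - k) \<le> n - 1" "k + Suc (t - k) \<le> n"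
            using True tz(1) by linarith+
          ultimately show ?thesis using fromj[of k] wlt[of k] by blast
        next
          case False
          have "k \<noteq> Suc t" using tz k by auto
          hence kt: "Suc t < k" using False by simp
          have pf3: "w t \<in> (F ^^ t) {j}" by (rule fromj)
          have r1: "w k \<in> (F ^^ Suc t) {j}" using sing_step[OF pf3 tz(2)] k(2) by simp
          have r2: "w (n - 1) \<in> (F ^^ (n - 1 - k)) {w k}" using path[of k "n - 1"] k by simp
          have pf4: "w (n - 1) \<in> (F ^^ (n - 1 - k + Suc t)) {j}"
            by (rule reach_trans[OF mono r1 r2])
          have "j \<in> (F ^^ Suc (n - 1 - k + Suc t)) {j}" using sing_step[OF pf4 jin] by simp
          moreover have "1 \<le> Suc (n - 1 - k + Suc t)" "Suc (n - 1 - k + Suc t) \<le> n - 1"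
            "0 + Suc (n - 1 - k + Suc t) \<le> n"
            using k kt by linarith+
          moreover have "j \<in> (F ^^ 0) {j}" by simp
          ultimately show ?thesis using j by blast
        qed
      next
        case False
        have singl: "F {w t} = {w (Suc t)}" if "t < n - 1" for t
        proof -
          have "\<forall>z\<in>F {w t}. z = w (Suc t)" using False that by blast
          thus ?thesis using wstep[of t] by blast
        qed
        have singx: "\<exists>u. F {x} = {u} \<and> u < n" if xn: "x < n" for x
        proof -
          obtain t where t: "t < n" "x = w t" using surj[OF xn] by blast
          show ?thesis
          proof (cases "t < n - 1")
            case True then show ?thesis using singl[OF True] t wlt[of "Suc t"] by simp
          next
            case False
            hence "t = n - 1" using t by simp
            hence "F {x} = {j}" using jin allj t by blast
            thus ?thesis using j by blast
          qed
        qed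
        have "\<exists>u. (F ^^ q) {j} = {u} \<and> u < n" for q
        proof (induction q)
          case 0 then show ?case using j by simp
        next
          case (Suc q)
          then obtain u where u: "(F ^^ q) {j} = {u}" "u < n" by blast
          obtain v where "F {u} = {v}" "v < n" using singx[OF u(2)] by blast
          thus ?case using u by simp
        qed
        then obtain u where "(F ^^ r) {j} = {u}" by blast
        hence "{..<n} = {u}" using prim[of "{j}"] j by simp
        hence "card {..<n} = 1" by simp
        thus ?thesis using n2 by simp
      qed
    qed
  qed
qed

theorem upper_bound:
  assumes "S \<noteq> {}" "S \<subseteq> {..<n}"
  shows "(F ^^ ((n - 1)^2 + 1)) S = {..<n}"
proof -
  obtain j where j: "j \<in> S" using assms by auto
  hence jn: "j < n" using assms by auto
  obtain a c y where acy: "y \<in> (F ^^ a) {j}" "y < n" "1 \<le> c" "c \<le> n - 1" "a + c \<le> n" "y \<in> (F ^^ c) {y}"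
    using walk_exists[OF jn] by blast
  have full: "(F ^^ ((n - 1) * c)) {y} = {..<n}" using chain_full[OF acy(2,3,6)] .
  have "(F ^^ ((n - 1) * c)) {y} \<subseteq> (F ^^ ((n - 1) * c)) ((F ^^ a) {j})"
    using acy by (intro monoD'[OF monoF_funpow[OF mono]]) auto
  hence "{..<n} \<subseteq> (F ^^ ((n - 1) * c + a)) {j}" using full by (simp add: funpow_add)
  moreover have "(F ^^ ((n - 1) * c + a)) {j} \<subseteq> {..<n}" using funpow_bounded jn by simp
  ultimately have "(F ^^ ((n - 1) * c + a)) {j} = {..<n}" by blast
  hence "(F ^^ ((n - 1)^2 + 1)) {j} = {..<n}"
    using full_after[OF _ arith_bound[OF acy(3,4,5) n2]] by blast
  moreover have "(F ^^ ((n - 1)^2 + 1)) {j} \<subseteq> (F ^^ ((n - 1)^2 + 1)) S"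
    using j by (intro monoD'[OF monoF_funpow[OF mono]]) auto
  moreover have "(F ^^ ((n - 1)^2 + 1)) S \<subseteq> {..<n}" using funpow_bounded[OF assms(2)] by blast
  ultimately show ?thesis by blast
qed

end

definition suppF :: "nat \<Rightarrow> nat \<Rightarrow> (nat list \<Rightarrow> real) \<Rightarrow> nat set \<Rightarrow> nat set" where
  "suppF m n A S = {i. i < n \<and> (\<exists>is \<in> index_tuples (m - 1) n. set is \<subseteq> S \<and> A (i # is) > 0)}"

definition supp :: "nat \<Rightarrow> (nat \<Rightarrow> real) \<Rightarrow> nat set" where
  "supp n x = {i. i < n \<and> x i > 0}"

lemma finite_index_tuples: "finite (index_tuples k n)"
proof -
  have "index_tuples k n = {xs. set xs \<subseteq> {..<n} \<and> length xs = k}"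
    by (auto simp: index_tuples_def)
  thus ?thesis by (simp add: finite_lists_length_eq)
qed

lemma tensor_apply_props:
  assumes A: "nonneg_tensor m n A" and m: "m \<ge> 2" and x: "\<forall>i<n. x i \<ge> 0" and i: "i < n"
  shows "tensor_apply m n A x i \<ge> 0"
    and "tensor_apply m n A x i > 0 \<longleftrightarrow> (\<exists>is \<in> index_tuples (m - 1) n. set is \<subseteq> supp n x \<and> A (i # is) > 0)"
proof -
  define t where "t = (\<lambda>is. A (i # is) * prod_list (map x is))"
  have ta: "tensor_apply m n A x i = (\<Sum>is \<in> index_tuples (m - 1) n. t is)"
    using i by (simp add: tensor_apply_def t_def)
  have Anonneg: "A (i # is) \<ge> 0" if "is \<in> index_tuples (m - 1) n" for "is"
  proof -
    have "i # is \<in> index_tuples m n" using that i m by (auto simp: index_tuples_def)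
    thus ?thesis using A by (auto simp: nonneg_tensor_def)
  qed
  have pnonneg: "prod_list (map x is) \<ge> 0" if "is \<in> index_tuples (m - 1) n" for "is"
    using that x by (intro prod_list_nonneg) (auto simp: index_tuples_def)
  have tnonneg: "t is \<ge> 0" if "is \<in> index_tuples (m - 1) n" for "is"
    using Anonneg[OF that] pnonneg[OF that] by (simp add: t_def)
  have tpos: "t is > 0 \<longleftrightarrow> set is \<subseteq> supp n x \<and> A (i # is) > 0" if "is \<in> index_tuples (m - 1) n" for "is"
  proof -
    have sub: "set is \<subseteq> {..<n}" using that by (simp add: index_tuples_def)
    have "prod_list (map x is) \<noteq> 0 \<longleftrightarrow> (\<forall>v \<in> set is. x v \<noteq> 0)"
      by (auto simp: prod_list_zero_iff)
    also have "\<dots> \<longleftrightarrow> set is \<subseteq> supp n x"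
      using sub x by (force simp: supp_def)
    finally have pz: "prod_list (map x is) > 0 \<longleftrightarrow> set is \<subseteq> supp n x"
      using pnonneg[OF that] by linarith
    show ?thesis
      unfolding t_def using pz pnonneg[OF that] Anonneg[OF that]
      by (metis mult_pos_pos order_less_le zero_less_mult_iff)
  qed
  show "tensor_apply m n A x i \<ge> 0" unfolding ta using tnonneg by (intro sum_nonneg) auto
  have "tensor_apply m n A x i > 0 \<longleftrightarrow> (\<exists>is \<in> index_tuples (m - 1) n. t is > 0)"
  proof
    assume "tensor_apply m n A x i > 0"
    hence "(\<Sum>is \<in> index_tuples (m - 1) n. t is) \<noteq> 0" unfolding ta by simp
    then obtain js where "js \<in> index_tuples (m - 1) n" "t js \<noteq> 0"
      by (meson sum.neutral)
    thus "\<exists>is \<in> index_tuples (m - 1) n. t is > 0" using tnonneg by force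
  next
    assume "\<exists>is \<in> index_tuples (m - 1) n. t is > 0"
    then obtain js where "js \<in> index_tuples (m - 1) n" "t js > 0" by blast
    thus "tensor_apply m n A x i > 0" unfolding ta
      using tnonneg finite_index_tuples by (intro sum_pos2) auto
  qed
  thus "tensor_apply m n A x i > 0 \<longleftrightarrow> (\<exists>is \<in> index_tuples (m - 1) n. set is \<subseteq> supp n x \<and> A (i # is) > 0)"
    using tpos by blast
qed

lemma T_props:
  assumes A: "nonneg_tensor m n A" and m: "m \<ge> 2" and x: "\<forall>i<n. x i \<ge> 0"
  shows "\<forall>i<n. T_map m n A x i \<ge> 0" and "supp n (T_map m n A x) = suppF m n A (supp n x)"
proof -
  have m1: "0 < m - 1" using m by simp
  show "\<forall>i<n. T_map m n A x i \<ge> 0"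
    using tensor_apply_props(1)[OF A m x] by (auto simp: T_map_def intro: real_root_ge_zero)
  show "supp n (T_map m n A x) = suppF m n A (supp n x)"
    using tensor_apply_props(2)[OF A m x] m1 by (auto simp: T_map_def supp_def suppF_def)
qed

lemma iter_props:
  assumes A: "nonneg_tensor m n A" and m: "m \<ge> 2" and x: "\<forall>i<n. x i \<ge> 0"
  shows "(\<forall>i<n. (T_map m n A ^^ r) x i \<ge> 0) \<and> supp n ((T_map m n A ^^ r) x) = (suppF m n A ^^ r) (supp n x)"
proof (induction r)
  case 0 then show ?case using x by simp
next
  case (Suc r)
  then show ?case using T_props[OF A m, of "(T_map m n A ^^ r) x"] by simp
qed

lemma suppF_mono: "monoF (suppF m n A)"
  unfolding monoF_def suppF_def by blast

lemma suppF_empty: "m \<ge> 2 \<Longrightarrow> suppF m n A {} = {}"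
  unfolding suppF_def index_tuples_def by auto

lemma suppF_bounded: "suppF m n A S \<subseteq> {..<n}"
  unfolding suppF_def by auto

lemma prim_char:
  assumes A: "nonneg_tensor m n A" and m: "m \<ge> 2"
  shows "primitive_at m n A r \<longleftrightarrow>
    (r > 0 \<and> (\<forall>S. S \<noteq> {} \<and> S \<subseteq> {..<n} \<longrightarrow> (suppF m n A ^^ r) S = {..<n}))"
proof
  assume pa: "primitive_at m n A r"
  hence r: "r > 0" by (simp add: primitive_at_def)
  have "(suppF m n A ^^ r) S = {..<n}" if S: "S \<noteq> {}" "S \<subseteq> {..<n}" for S
  proof -
    define x :: "nat \<Rightarrow> real" where "x = (\<lambda>i. if i \<in> S then 1 else 0)"
    have xn: "\<forall>i<n. x i \<ge> 0" by (simp add: x_def)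
    obtain k where k: "k \<in> S" using S by blast
    have nz: "nonneg_nonzero_vec n x"
      using S(2) k xn unfolding nonneg_nonzero_vec_def x_def by force
    have sx: "supp n x = S" using S by (auto simp: supp_def x_def)
    have pos: "\<forall>i<n. (T_map m n A ^^ r) x i > 0" using pa nz by (simp add: primitive_at_def)
    have "supp n ((T_map m n A ^^ r) x) = {..<n}" using pos by (auto simp: supp_def)
    thus ?thesis using iter_props[OF A m xn, of r] sx by simp
  qed
  thus "r > 0 \<and> (\<forall>S. S \<noteq> {} \<and> S \<subseteq> {..<n} \<longrightarrow> (suppF m n A ^^ r) S = {..<n})" using r by blast
next
  assume h: "r > 0 \<and> (\<forall>S. S \<noteq> {} \<and> S \<subseteq> {..<n} \<longrightarrow> (suppF m n A ^^ r) S = {..<n})"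
  show "primitive_at m n A r" unfolding primitive_at_def
  proof (intro conjI allI impI)
    show "0 < r" using h by simp
    fix x i assume nz: "nonneg_nonzero_vec n x" and i: "i < n"
    have xn: "\<forall>i<n. x i \<ge> 0" using nz by (simp add: nonneg_nonzero_vec_def)
    obtain k where k: "k < n" "x k \<noteq> 0" using nz unfolding nonneg_nonzero_vec_def by blast
    hence "x k > 0" using xn by (simp add: order_less_le)
    hence ne: "supp n x \<noteq> {}" using k unfolding supp_def by blast
    have sub: "supp n x \<subseteq> {..<n}" unfolding supp_def by blast
    have "(suppF m n A ^^ r) (supp n x) = {..<n}" using h ne sub by blast
    hence "supp n ((T_map m n A ^^ r) x) = {..<n}" using iter_props[OF A m xn, of r] by simp
    thus "(T_map m n A ^^ r) x i > 0" using i by (auto simp: supp_def)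
  qed
qed

theorem degree_upper:
  assumes m: "m \<ge> 3" and n: "n \<ge> 2" and P: "primitive_tensor m n A"
  shows "primitive_degree m n A \<in> {1..(n - 1)^2 + 1}"
proof -
  have A: "nonneg_tensor m n A" and ex: "\<exists>r. primitive_at m n A r"
    using P by (auto simp: primitive_tensor_def)
  have m2: "m \<ge> 2" using m by simp
  obtain r where r: "primitive_at m n A r" using ex by blast
  hence rc: "r > 0" "\<And>S. S \<noteq> {} \<Longrightarrow> S \<subseteq> {..<n} \<Longrightarrow> (suppF m n A ^^ r) S = {..<n}"
    using prim_char[OF A m2] by auto
  interpret prim "suppF m n A" n r
    using rc suppF_mono suppF_empty[OF m2] suppF_bounded n by unfold_locales auto
  have "primitive_at m n A ((n - 1)^2 + 1)"
    using prim_char[OF A m2] upper_bound by simp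
  hence le: "primitive_degree m n A \<le> (n - 1)^2 + 1"
    unfolding primitive_degree_def by (rule Least_le)
  have "primitive_at m n A (primitive_degree m n A)"
    unfolding primitive_degree_def using r by (rule LeastI)
  hence "primitive_degree m n A \<ge> 1" by (simp add: primitive_at_def)
  with le show ?thesis by simp
qed

definition cint :: "nat \<Rightarrow> nat \<Rightarrow> nat \<Rightarrow> nat set" where
  "cint n L e = {x. x < n \<and> (int e - int x) mod int n < int L}"

lemma cint_mem: "x \<in> cint n L e \<longleftrightarrow> x < n \<and> (int e - int x) mod int n < int L"
  by (simp add: cint_def)

lemma cint_sub: "cint n L e \<subseteq> {..<n}"
  by (auto simp: cint_def)

lemma diff_mod_cases:
  assumes "a < n" "b < n"
  shows "(int a - int b) mod int n = (if b \<le> a then int a - int b else int a - int b + int n)"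
proof (cases "b \<le> a")
  case True then show ?thesis using assms by (simp add: mod_pos_pos_trivial)
next
  case False
  have "(int a - int b) mod int n = (int a - int b + int n) mod int n" by simp
  also have "\<dots> = int a - int b + int n" using assms False by (intro mod_pos_pos_trivial) auto
  finally show ?thesis using False by simp
qed

lemma cint_one: assumes "t < n" shows "cint n 1 t = {t}"
proof -
  have "(int t - int x) mod int n < 1 \<longleftrightarrow> x = t" if "x < n" for x
    using diff_mod_cases[OF assms that] assms that by auto
  thus ?thesis using assms by (auto simp: cint_def)
qed

lemma cint_shift:
  assumes n: "n > 0" and e: "e < n"
  shows "(\<lambda>x. Suc x mod n) ` cint n L e = cint n L (Suc e mod n)"
proof
  show "(\<lambda>x. Suc x mod n) ` cint n L e \<subseteq> cint n L (Suc e mod n)"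
  proof
    fix y assume "y \<in> (\<lambda>x. Suc x mod n) ` cint n L e"
    then obtain x where x: "x \<in> cint n L e" "y = Suc x mod n" by blast
    have "(int (Suc e mod n) - int y) mod int n = ((int e + 1) mod int n - (int x + 1) mod int n) mod int n"
      using x by (simp add: of_nat_mod ac_simps)
    also have "\<dots> = (int e - int x) mod int n" by (simp add: mod_diff_eq)
    finally show "y \<in> cint n L (Suc e mod n)" using x n by (simp add: cint_def)
  qed
next
  show "cint n L (Suc e mod n) \<subseteq> (\<lambda>x. Suc x mod n) ` cint n L e"
  proof
    fix y assume y: "y \<in> cint n L (Suc e mod n)"
    define x where "x = (y + n - 1) mod n"
    have yn: "y < n" using y by (simp add: cint_def)
    have sx: "Suc x mod n = y"
    proof -
      have "Suc x mod n = Suc (y + n - 1) mod n" by (simp add: x_def mod_Suc_eq)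
      also have "Suc (y + n - 1) = y + n" using n by simp
      finally show ?thesis using yn by simp
    qed
    have ix: "int x = (int y + int n - 1) mod int n" using n by (simp add: x_def of_nat_mod of_nat_diff)
    have "(int e - int x) mod int n = (int e - (int y + int n - 1)) mod int n"
      unfolding ix by (simp add: mod_diff_right_eq)
    also have "\<dots> = ((int e + 1 - int y) + (- 1) * int n) mod int n" by (simp add: algebra_simps)
    also have "\<dots> = (int e + 1 - int y) mod int n" by (rule mod_mult_self1)
    also have "\<dots> = ((int e + 1) mod int n - int y) mod int n" by (simp add: mod_diff_left_eq)
    also have "\<dots> = (int (Suc e mod n) - int y) mod int n" by (simp add: of_nat_mod ac_simps)
    finally have "x \<in> cint n L e" using y by (simp add: cint_def x_def)
    thus "y \<in> (\<lambda>x. Suc x mod n) ` cint n L e" using sx by force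
  qed
qed

lemma cint_iff:
  assumes "e < n"
  shows "x \<in> cint n L e \<longleftrightarrow> x < n \<and> (if x \<le> e then e - x < L else e + n - x < L)"
proof (cases "x < n")
  case True
  show ?thesis using diff_mod_cases[OF assms True] True assms by (auto simp: cint_def)
qed (simp add: cint_def)

definition Wm :: "nat \<Rightarrow> nat set \<Rightarrow> nat set" where
  "Wm n S = {i. i < n \<and> (\<exists>x\<in>S. i = Suc x mod n \<or> (x = n - 1 \<and> i = 1))}"

lemma Wm_shift: "S \<subseteq> {..<n} \<Longrightarrow> (\<lambda>x. Suc x mod n) ` S \<subseteq> Wm n S"
  by (auto simp: Wm_def)

lemma Wm_split: "n \<ge> 2 \<Longrightarrow> Wm n S = (\<lambda>x. Suc x mod n) ` S \<union> (if n - 1 \<in> S then {1} else {})"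
  by (auto simp: Wm_def)

lemma Wm_noturn:
  assumes n: "n \<ge> 2" and e: "Suc e < n"
  shows "Wm n (cint n L e) = cint n L (Suc e)"
proof -
  have sh: "(\<lambda>x. Suc x mod n) ` cint n L e = cint n L (Suc e)"
    using cint_shift[of n e L] n e by simp
  have "1 \<in> cint n L (Suc e)" if "n - 1 \<in> cint n L e"
  proof -
    have "e + n - (n - 1) < L" using that cint_iff[of e n "n - 1" L] e by (auto split: if_splits)
    hence "e < L" by linarith
    thus ?thesis using cint_iff[of "Suc e" n 1 L] e n by simp
  qed
  thus ?thesis using Wm_split[OF n] sh by auto
qed

lemma Wm_turn:
  assumes n: "n \<ge> 2" and L: "1 \<le> L" "L + 1 \<le> n"
  shows "Wm n (cint n L (n - 1)) = cint n (Suc L) 1"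
proof -
  have sh: "(\<lambda>x. Suc x mod n) ` cint n L (n - 1) = cint n L 0"
    using cint_shift[of n "n - 1" L] n by simp
  have inn: "n - 1 \<in> cint n L (n - 1)" using cint_iff[of "n - 1" n "n - 1" L] n L by simp
  have "cint n L 0 \<union> {1} = cint n (Suc L) 1"
  proof (intro set_eqI)
    fix x
    show "x \<in> cint n L 0 \<union> {1} \<longleftrightarrow> x \<in> cint n (Suc L) 1"
      using cint_iff[of 0 n x L] cint_iff[of 1 n x "Suc L"] n L by auto
  qed
  thus ?thesis using Wm_split[OF n] sh inn by auto
qed

lemma cint_missing:
  assumes e: "e < n" and L: "L < n"
  shows "Suc e mod n \<notin> cint n L e"
proof (cases "Suc e < n")
  case True
  hence "Suc e mod n = Suc e" by simp
  moreover have "Suc e \<notin> cint n L e"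
  proof
    assume "Suc e \<in> cint n L e"
    hence "e + n - Suc e < L" using cint_iff[OF e, of "Suc e" L] by simp
    thus False using L by linarith
  qed
  ultimately show ?thesis by simp
next
  case False
  hence en: "Suc e = n" using e by simp
  hence "Suc e mod n = 0" by simp
  moreover have "0 \<notin> cint n L e"
  proof
    assume "0 \<in> cint n L e"
    hence "e - 0 < L" using cint_iff[OF e, of 0 L] by simp
    thus False using L en by linarith
  qed
  ultimately show ?thesis by simp
qed

lemma cint_not_full:
  assumes "e < n" "L < n"
  shows "cint n L e \<noteq> {..<n}"
proof
  assume h: "cint n L e = {..<n}"
  have "Suc e mod n < n" using assms by simp
  hence "Suc e mod n \<in> cint n L e" using h by simp
  thus False using cint_missing[OF assms] by simp
qed

definition dst :: "nat \<Rightarrow> nat \<Rightarrow> nat \<Rightarrow> nat" where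
  "dst n e x = (if x \<le> e then e - x else e + n - x)"

lemma dst_int: "e < n \<Longrightarrow> x < n \<Longrightarrow> int (dst n e x) = (int e - int x) mod int n"
  using diff_mod_cases[of e n x] by (auto simp: dst_def of_nat_diff)

lemma dst_lt: "e < n \<Longrightarrow> x < n \<Longrightarrow> dst n e x < n"
  by (auto simp: dst_def)

lemma dst_self: "dst n e e = 0"
  by (simp add: dst_def)

lemma cint_dst: "e < n \<Longrightarrow> x \<in> cint n L e \<longleftrightarrow> x < n \<and> dst n e x < L"
  using cint_iff[of e n x L] by (simp add: dst_def)

lemma dst_add:
  assumes "a < n" "b < n" "c < n"
  shows "dst n a c = (dst n a b + dst n b c) mod n"
proof -
  have "int (dst n a c) = (int a - int c) mod int n" using assms by (simp add: dst_int)
  also have "\<dots> = ((int a - int b) + (int b - int c)) mod int n" by simp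
  also have "\<dots> = ((int a - int b) mod int n + (int b - int c) mod int n) mod int n"
    by (simp add: mod_add_eq)
  also have "\<dots> = int ((dst n a b + dst n b c) mod n)"
    using assms by (simp add: dst_int of_nat_mod)
  finally show ?thesis by simp
qed

lemma dst_inv:
  assumes "d < n" "e < n"
  shows "\<exists>z<n. dst n e z = d"
proof (cases "d \<le> e")
  case True
  thus ?thesis using assms by (intro exI[of _ "e - d"]) (auto simp: dst_def)
next
  case False
  thus ?thesis using assms by (intro exI[of _ "e + n - d"]) (auto simp: dst_def)
qed

lemma cint_not_sub:
  assumes e: "e < n" and e': "e' < n" and L: "L' \<le> L" "L \<le> n" "1 \<le> L'" "L' < n"
    and new: "L' < L \<or> e \<noteq> e'"
  shows "\<not> cint n L e \<subseteq> cint n L' e'"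
proof
  assume sub: "cint n L e \<subseteq> cint n L' e'"
  have ein: "e \<in> cint n L e" using cint_dst[OF e, of e L] e L by (simp add: dst_self)
  hence "e \<in> cint n L' e'" using sub by blast
  hence dl: "dst n e' e < L'" using cint_dst[OF e', of e L'] by simp
  define d where "d = L' - dst n e' e"
  have dpos: "0 < d" "d \<le> L'" using dl by (auto simp: d_def)
  have dL: "d < L"
  proof (cases "L' < L")
    case True then show ?thesis using dpos by simp
  next
    case False
    hence ne: "e \<noteq> e'" and LL: "L' = L" using new L by auto
    have "dst n e' e \<noteq> 0" using ne e e' by (auto simp: dst_def)
    thus ?thesis using LL dl by (simp add: d_def)
  qed
  obtain z where z: "z < n" "dst n e z = d" using dst_inv[of d n e] dL L e by auto
  have "z \<in> cint n L e" using cint_dst[OF e, of z L] z dL by simp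
  moreover have "dst n e' z = L'"
    using dst_add[OF e' e z(1)] z dl L by (simp add: d_def)
  hence "z \<notin> cint n L' e'" using cint_dst[OF e', of z L'] by simp
  ultimately show False using sub by blast
qed

definition pairT :: "(nat \<Rightarrow> nat \<Rightarrow> nat set) \<Rightarrow> nat list \<Rightarrow> real" where
  "pairT G xs = (case xs of i # x # y # _ \<Rightarrow> if i \<in> G x y then 1 else 0 | _ \<Rightarrow> 0)"

lemma pairT_nonneg: "nonneg_tensor m n (pairT G)"
  unfolding nonneg_tensor_def pairT_def by (auto split: list.splits)

lemma suppF_pairT:
  assumes m: "m \<ge> 3" and S: "S \<subseteq> {..<n}"
  shows "suppF m n (pairT G) S = {i. i < n \<and> (\<exists>x\<in>S. \<exists>y\<in>S. i \<in> G x y)}"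
proof (intro set_eqI iffI)
  fix i assume "i \<in> suppF m n (pairT G) S"
  then obtain js where i: "i < n" and js: "js \<in> index_tuples (m - 1) n" "set js \<subseteq> S" "pairT G (i # js) > 0"
    unfolding suppF_def by blast
  have len: "length js = m - 1" using js by (simp add: index_tuples_def)
  then obtain x y rest where js2: "js = x # y # rest" using m
    by (cases js; cases "tl js") auto
  have "i \<in> G x y" using js(3) by (simp add: js2 pairT_def split: if_splits)
  thus "i \<in> {i. i < n \<and> (\<exists>x\<in>S. \<exists>y\<in>S. i \<in> G x y)}" using i js(2) js2 by auto
next
  fix i assume "i \<in> {i. i < n \<and> (\<exists>x\<in>S. \<exists>y\<in>S. i \<in> G x y)}"
  then obtain x y where i: "i < n" and xy: "x \<in> S" "y \<in> S" "i \<in> G x y" by blast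
  define js where "js = x # y # replicate (m - 3) y"
  have "length js = m - 1" using m by (simp add: js_def)
  moreover have "set js \<subseteq> S" using xy by (auto simp: js_def)
  ultimately have "js \<in> index_tuples (m - 1) n" using S by (auto simp: index_tuples_def)
  moreover have "pairT G (i # js) > 0" using xy by (simp add: js_def pairT_def)
  ultimately show "i \<in> suppF m n (pairT G) S" unfolding suppF_def using i \<open>set js \<subseteq> S\<close> by blast
qed

lemma funpow_cong_sub:
  assumes "\<And>S. S \<subseteq> {..<n} \<Longrightarrow> F S = H S" "\<And>S. H S \<subseteq> {..<n}" "S \<subseteq> {..<n}"
  shows "(F ^^ k) S = (H ^^ k) S"
proof (induction k)
  case 0 then show ?case by simp
next
  case (Suc k)
  have "(H ^^ k) S \<subseteq> {..<n}" using assms by (cases k) auto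
  thus ?case using Suc assms(1) by simp
qed

lemma degree_exact:
  assumes A: "nonneg_tensor m n A" and m: "m \<ge> 2" and k: "k \<ge> 1"
    and full: "\<And>j. j < n \<Longrightarrow> (suppF m n A ^^ k) {j} = {..<n}"
    and wit: "jw < n" "\<And>r. r < k \<Longrightarrow> (suppF m n A ^^ r) {jw} \<noteq> {..<n}"
  shows "primitive_tensor m n A \<and> primitive_degree m n A = k"
proof -
  let ?F = "suppF m n A"
  have fullS: "(?F ^^ k) S = {..<n}" if Sne: "S \<noteq> {}" and Ssub: "S \<subseteq> {..<n}" for S
  proof -
    obtain j where j: "j \<in> S" using Sne by blast
    have "(?F ^^ k) {j} \<subseteq> (?F ^^ k) S"
      using j by (intro monoD'[OF monoF_funpow[OF suppF_mono]]) auto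
    moreover have "(?F ^^ k) S \<subseteq> {..<n}" using k suppF_bounded
      by (cases k) auto
    ultimately show ?thesis using full[of j] j Ssub by auto
  qed
  have pk: "primitive_at m n A k" using prim_char[OF A m] fullS k by auto
  have npr: "\<not> primitive_at m n A r" if "r < k" for r
  proof
    assume "primitive_at m n A r"
    hence "(?F ^^ r) {jw} = {..<n}" using prim_char[OF A m] wit(1) by auto
    thus False using wit(2)[OF that] by simp
  qed
  have "primitive_degree m n A = k" unfolding primitive_degree_def
    using pk npr by (intro Least_equality) (auto simp: not_less[symmetric])
  thus ?thesis using pk A by (auto simp: primitive_tensor_def)
qed

definition g1 :: "nat \<Rightarrow> nat \<Rightarrow> nat \<Rightarrow> nat set" where
  "g1 n k x = (if k - 1 \<le> x then {..<n} else {Suc x})"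

definition G1 :: "nat \<Rightarrow> nat \<Rightarrow> nat \<Rightarrow> nat \<Rightarrow> nat set" where
  "G1 n k x y = g1 n k x \<union> g1 n k y"

definition Phi1 :: "nat \<Rightarrow> nat \<Rightarrow> nat set \<Rightarrow> nat set" where
  "Phi1 n k S = {i. i < n \<and> (\<exists>x\<in>S. i \<in> g1 n k x)}"

lemma Phi1_eq: "{i. i < n \<and> (\<exists>x\<in>S. \<exists>y\<in>S. i \<in> G1 n k x y)} = Phi1 n k S"
  unfolding Phi1_def G1_def by blast

lemma Phi1_orbit:
  assumes j: "j < n" and k: "1 \<le> k" "k \<le> n"
  shows "(Phi1 n k ^^ t) {j} = (if t = 0 \<or> j + t < k then {j + t} else {..<n})"
proof (induction t)
  case 0 then show ?case by simp
next
  case (Suc t)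
  show ?case
  proof (cases "t = 0 \<or> j + t < k")
    case True
    hence prev: "(Phi1 n k ^^ t) {j} = {j + t}" using Suc by simp
    have jt: "j + t < n" using True j k by auto
    show ?thesis
    proof (cases "k - 1 \<le> j + t")
      case True
      hence "Phi1 n k {j + t} = {..<n}" by (auto simp: Phi1_def g1_def)
      moreover have "\<not> (Suc t = 0 \<or> j + Suc t < k)" using True by simp
      ultimately show ?thesis using prev by simp
    next
      case False
      hence "Phi1 n k {j + t} = {Suc (j + t)}" using jt k by (auto simp: Phi1_def g1_def)
      moreover have "j + Suc t < k" using False by simp
      ultimately show ?thesis using prev by simp
    qed
  next
    case False
    hence prev: "(Phi1 n k ^^ t) {j} = {..<n}" using Suc by simp
    have "n - 1 < n" "k - 1 \<le> n - 1" using k by auto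
    hence "Phi1 n k {..<n} = {..<n}" unfolding Phi1_def g1_def by force
    moreover have "\<not> (Suc t = 0 \<or> j + Suc t < k)" using False by simp
    ultimately show ?thesis using prev by simp
  qed
qed

theorem family1:
  assumes m: "m \<ge> 3" and n: "n \<ge> 2" and k: "1 \<le> k" "k \<le> n"
  shows "\<exists>A. primitive_tensor m n A \<and> primitive_degree m n A = k"
proof -
  let ?A = "pairT (G1 n k)"
  have eq: "suppF m n ?A S = Phi1 n k S" if "S \<subseteq> {..<n}" for S
    using suppF_pairT[OF m that] Phi1_eq by simp
  have it: "(suppF m n ?A ^^ t) {j} = (Phi1 n k ^^ t) {j}" if "j < n" for t j
    using that by (intro funpow_cong_sub[of n]) (auto simp: eq Phi1_def)
  have "primitive_tensor m n ?A \<and> primitive_degree m n ?A = k"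
  proof (rule degree_exact[OF pairT_nonneg, where jw = 0])
    show "2 \<le> m" using m by simp
    show "1 \<le> k" using k by simp
    show "(suppF m n ?A ^^ k) {j} = {..<n}" if "j < n" for j
      using it[OF that] Phi1_orbit[OF that k, of k] k by simp
    show "0 < n" using n by simp
    show "(suppF m n ?A ^^ r) {0} \<noteq> {..<n}" if "r < k" for r
    proof -
      have "(suppF m n ?A ^^ r) {0} = {r}"
        using it[of 0 r] Phi1_orbit[of 0 n k r] n k that by simp
      moreover have "{r} \<noteq> {..<n}"
      proof
        assume "{r} = {..<n}"
        hence "card {r} = card {..<n}" by simp
        thus False using n by simp
      qed
      ultimately show ?thesis by simp
    qed
  qed
  thus ?thesis by blast
qed

lemma dst_swap: "a < n \<Longrightarrow> b < n \<Longrightarrow> a \<noteq> b \<Longrightarrow> dst n a b + dst n b a = n"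
  by (auto simp: dst_def)

lemma dst_suc: assumes "n \<ge> 2" "e < n" shows "dst n (Suc e mod n) e = 1"
proof (cases "Suc e < n")
  case True then show ?thesis by (simp add: dst_def)
next
  case False
  hence "Suc e = n" using assms by simp
  thus ?thesis using assms by (auto simp: dst_def)
qed

lemma harmless:
  assumes n: "n \<ge> 2" and e0: "e0 < n" and s0: "s0 < n" and L: "2 \<le> L" "L \<le> n - 1"
    and ds: "dst n e0 s0 = L - 1"
    and e': "e' < n" and L': "L' < n"
    and ein: "e0 \<in> cint n L' e'" and sin: "s0 \<in> cint n L' e'"
  shows "cint n L e0 \<subseteq> cint n L' e' \<or> cint n (n - L) s0 \<subseteq> cint n L' (Suc e' mod n)"
proof -
  define ue where "ue = dst n e' e0"
  define us where "us = dst n e' s0"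
  have ue: "ue < L'" using ein cint_dst[OF e', of e0 L'] by (simp add: ue_def)
  have us: "us < L'" using sin cint_dst[OF e', of s0 L'] by (simp add: us_def)
  have usd: "us = (ue + (L - 1)) mod n" using dst_add[OF e' e0 s0] ds by (simp add: us_def ue_def)
  show ?thesis
  proof (cases "ue + (L - 1) < n")
    case True
    hence usv: "us = ue + (L - 1)" using usd by simp
    have "cint n L e0 \<subseteq> cint n L' e'"
    proof
      fix x assume x: "x \<in> cint n L e0"
      hence xn: "x < n" and dx: "dst n e0 x < L" using cint_dst[OF e0] by auto
      have "dst n e' x = (ue + dst n e0 x) mod n" using dst_add[OF e' e0 xn] by (simp add: ue_def)
      also have "\<dots> = ue + dst n e0 x" using True dx by simp
      finally have "dst n e' x < L'" using dx usv us by simp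
      thus "x \<in> cint n L' e'" using cint_dst[OF e'] xn by simp
    qed
    thus ?thesis ..
  next
    case False
    have "ue + (L - 1) < 2 * n" using ue L' L by simp
    hence usv: "us = ue + (L - 1) - n" using usd False
      by (simp add: le_mod_geq)
    have sn: "Suc e' mod n < n" using n by simp
    have "cint n (n - L) s0 \<subseteq> cint n L' (Suc e' mod n)"
    proof
      fix x assume x: "x \<in> cint n (n - L) s0"
      hence xn: "x < n" and dx: "dst n s0 x < n - L" using cint_dst[OF s0] by auto
      have "dst n e' x = (us + dst n s0 x) mod n" using dst_add[OF e' s0 xn] by (simp add: us_def)
      also have "\<dots> = us + dst n s0 x" using usv dx ue L' False by simp
      finally have d1: "dst n e' x = us + dst n s0 x" .
      have "dst n (Suc e' mod n) x = (dst n (Suc e' mod n) e' + dst n e' x) mod n"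
        using dst_add[OF sn e' xn] .
      also have "\<dots> = (1 + (us + dst n s0 x)) mod n" using dst_suc[OF n e'] d1 by simp
      also have "\<dots> = 1 + (us + dst n s0 x)" using usv dx ue L' False L by simp
      finally have "dst n (Suc e' mod n) x < L'" using usv dx ue L False by simp
      thus "x \<in> cint n L' (Suc e' mod n)" using cint_dst[OF sn] xn by simp
    qed
    thus ?thesis ..
  qed
qed

lemma trigger_full:
  assumes n: "n \<ge> 2" and e0: "e0 < n" and s0: "s0 < n" and L: "2 \<le> L" "L \<le> n - 1"
    and ds: "dst n e0 s0 = L - 1"
  shows "cint n L (Suc e0 mod n) \<union> cint n (n - L) s0 = {..<n}"
proof (intro equalityI subsetI)
  fix x assume "x \<in> cint n L (Suc e0 mod n) \<union> cint n (n - L) s0"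
  thus "x \<in> {..<n}" using cint_sub by blast
next
  fix x assume "x \<in> {..<n}"
  hence xn: "x < n" by simp
  have sn: "Suc e0 mod n < n" using n by simp
  define w where "w = dst n (Suc e0 mod n) x"
  show "x \<in> cint n L (Suc e0 mod n) \<union> cint n (n - L) s0"
  proof (cases "w < L")
    case True then show ?thesis using cint_dst[OF sn] xn by (simp add: w_def)
  next
    case False
    have wn: "w < n" using dst_lt[OF sn xn] by (simp add: w_def)
    have d1: "dst n (Suc e0 mod n) s0 = L"
      using dst_add[OF sn e0 s0] dst_suc[OF n e0] ds L n by simp
    have neq: "Suc e0 mod n \<noteq> s0" using d1 L dst_self[of n s0] by auto
    have d2: "dst n s0 (Suc e0 mod n) = n - L" using dst_swap[OF sn s0 neq] d1 by simp
    have "dst n s0 x = (dst n s0 (Suc e0 mod n) + w) mod n" using dst_add[OF s0 sn xn] by (simp add: w_def)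
    also have "\<dots> = (n - L + w) mod n" using d2 by simp
    also have "\<dots> = w - L" using False wn L
      by (simp add: le_mod_geq)
    finally have "dst n s0 x < n - L" using wn False by simp
    thus ?thesis using cint_dst[OF s0] xn by simp
  qed
qed

definition Lf :: "nat \<Rightarrow> nat \<Rightarrow> nat" where
  "Lf n t = (if t < n then 1 else (t - n) div (n - 1) + 2)"

definition Ef :: "nat \<Rightarrow> nat \<Rightarrow> nat" where
  "Ef n t = (if t < n then t else (t - n) mod (n - 1) + 1)"

definition Iorb :: "nat \<Rightarrow> nat \<Rightarrow> nat set" where
  "Iorb n t = cint n (Lf n t) (Ef n t)"

lemma sq_eq: "(n::nat) \<ge> 2 \<Longrightarrow> (n - 1)^2 = (n - 2) * (n - 1) + (n - 1)"
proof -
  assume "n \<ge> 2"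
  hence "n = (n - 2) + 2" by simp
  then obtain k where "n = k + 2" by blast
  thus ?thesis by (simp add: power2_eq_square algebra_simps)
qed

lemma LE_bounds:
  assumes n: "n \<ge> 3" and t: "n \<le> t" "t \<le> (n - 1)^2"
  shows "2 \<le> Lf n t" "Lf n t \<le> n - 1" "1 \<le> Ef n t" "Ef n t \<le> n - 1"
proof -
  have "t - n < (n - 2) * (n - 1)" using t sq_eq[of n] n by linarith
  hence "(t - n) div (n - 1) < n - 2" by (rule less_mult_imp_div_less)
  thus "2 \<le> Lf n t" "Lf n t \<le> n - 1" using t n by (auto simp: Lf_def)
  have h: "(t - n) mod (n - 1) < n - 1" using n by simp
  have "Ef n t = (t - n) mod (n - 1) + 1" using t n by (simp add: Ef_def)
  thus "1 \<le> Ef n t" "Ef n t \<le> n - 1" using h by linarith+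
qed

lemma Iorb_small:
  assumes "t < n" shows "Iorb n t = {t}"
proof -
  have "Lf n t = 1" "Ef n t = t" using assms by (auto simp: Lf_def Ef_def)
  thus ?thesis using cint_one[OF assms] by (simp add: Iorb_def)
qed

lemma Iorb_step:
  assumes n: "n \<ge> 3" and t: "t < (n - 1)^2"
  shows "Wm n (Iorb n t) = Iorb n (Suc t)"
proof -
  have n2: "n \<ge> 2" using n by simp
  consider (a) "t < n - 1" | (b) "t = n - 1" | (c) "n \<le> t" by linarith
  thus ?thesis
  proof cases
    case a
    have "Wm n (cint n 1 t) = cint n 1 (Suc t)" using Wm_noturn[OF n2] a by simp
    moreover have "Lf n t = 1" "Ef n t = t" "Lf n (Suc t) = 1" "Ef n (Suc t) = Suc t"
      using a by (auto simp: Lf_def Ef_def)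
    ultimately show ?thesis by (simp add: Iorb_def)
  next
    case b
    have "Wm n (cint n 1 (n - 1)) = cint n 2 1" using Wm_turn[OF n2, of 1] n2 by (simp add: numeral_2_eq_2)
    moreover have "Suc t = n" using b n by simp
    moreover have "Lf n t = 1" "Ef n t = n - 1" "Lf n n = 2" "Ef n n = 1"
      using b n by (auto simp: Lf_def Ef_def)
    ultimately show ?thesis by (simp add: Iorb_def)
  next
    case c
    define q where "q = (t - n) div (n - 1)"
    define r where "r = (t - n) mod (n - 1)"
    have LB: "2 \<le> Lf n t" "Lf n t \<le> n - 1" "1 \<le> Ef n t" "Ef n t \<le> n - 1"
      using LE_bounds[OF n c] t by auto
    have Lt: "Lf n t = q + 2" "Ef n t = r + 1" using c by (auto simp: Lf_def Ef_def q_def r_def)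
    have st: "Suc t - n = Suc (t - n)" using c by simp
    show ?thesis
    proof (cases "Suc r = n - 1")
      case False
      have rl: "r < n - 1" using n by (simp add: r_def)
      hence r2: "Suc (Suc r) < n" using False by linarith
      have m1: "Suc (t - n) mod (n - 1) = Suc r" using False by (simp add: mod_Suc r_def)
      have d1: "Suc (t - n) div (n - 1) = q" using m1 by (simp add: div_Suc q_def)
      have "Wm n (cint n (q + 2) (r + 1)) = cint n (q + 2) (Suc (r + 1))"
        using Wm_noturn[OF n2, of "r + 1"] r2 by simp
      moreover have "Lf n (Suc t) = q + 2" "Ef n (Suc t) = Suc (r + 1)"
        using c st m1 d1 by (auto simp: Lf_def Ef_def)
      ultimately show ?thesis using Lt by (simp add: Iorb_def)
    next
      case True
      have m1: "Suc (t - n) mod (n - 1) = 0" using True by (simp add: mod_Suc r_def)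
      have d1: "Suc (t - n) div (n - 1) = Suc q" using m1 by (simp add: div_Suc q_def)
      have "Wm n (cint n (q + 2) (n - 1)) = cint n (Suc (q + 2)) 1"
        using Wm_turn[OF n2, of "q + 2"] LB Lt by simp
      moreover have "Lf n (Suc t) = Suc (q + 2)" "Ef n (Suc t) = 1"
        using c st m1 d1 by (auto simp: Lf_def Ef_def)
      moreover have "Ef n t = n - 1" using Lt True n by simp
      ultimately show ?thesis using Lt by (simp add: Iorb_def)
    qed
  qed
qed

lemma Iorb_new:
  assumes n: "n \<ge> 3" and t: "t < t0" and t0: "n \<le> t0" "t0 \<le> (n - 1)^2"
  shows "Lf n t < Lf n t0 \<or> (Lf n t = Lf n t0 \<and> Ef n t \<noteq> Ef n t0)"
proof (cases "t < n")
  case True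
  thus ?thesis using LE_bounds[OF n t0] by (simp add: Lf_def)
next
  case False
  define q where "q = (t - n) div (n - 1)"
  define r where "r = (t - n) mod (n - 1)"
  define q0 where "q0 = (t0 - n) div (n - 1)"
  define r0 where "r0 = (t0 - n) mod (n - 1)"
  have "q \<le> q0" unfolding q_def q0_def using t by (intro div_le_mono) simp
  moreover have "q = q0 \<Longrightarrow> r \<noteq> r0"
  proof
    assume "q = q0" "r = r0"
    hence "t - n = t0 - n" unfolding q_def q0_def r_def r0_def by (metis div_mult_mod_eq)
    thus False using t False by simp
  qed
  ultimately show ?thesis using False t t0 by (auto simp: Lf_def Ef_def q_def r_def q0_def r0_def)
qed

lemma Wm_full:
  assumes n: "n \<ge> 2" shows "Wm n {..<n} = {..<n}"
proof -
  have "i \<in> Wm n {..<n}" if i: "i < n" for i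
  proof (cases "i = 0")
    case True
    have "Suc (n - 1) mod n = i" using True n by simp
    hence "\<exists>x\<in>{..<n}. i = Suc x mod n \<or> (x = n - 1 \<and> i = 1)" using n
      by (intro bexI[of _ "n - 1"]) auto
    thus ?thesis using i unfolding Wm_def by simp
  next
    case False
    have "Suc (i - 1) mod n = i" using False i by simp
    hence "\<exists>x\<in>{..<n}. i = Suc x mod n \<or> (x = n - 1 \<and> i = 1)" using i
      by (intro bexI[of _ "i - 1"]) auto
    thus ?thesis using i unfolding Wm_def by simp
  qed
  moreover have "Wm n {..<n} \<subseteq> {..<n}" by (auto simp: Wm_def)
  ultimately show ?thesis by blast
qed

lemma Iorb_props_conj:
  assumes n: "n \<ge> 3" and t: "t \<le> (n - 1)^2"
  shows "1 \<le> Lf n t \<and> Lf n t < n \<and> Ef n t < n"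
proof (cases "t < n")
  case True thus ?thesis using n by (auto simp: Lf_def Ef_def)
next
  case False
  hence "n \<le> t" by simp
  from LE_bounds[OF n this t] n show ?thesis by auto
qed

lemma Iorb_props:
  assumes n: "n \<ge> 3" and t: "t \<le> (n - 1)^2"
  shows "1 \<le> Lf n t" "Lf n t < n" "Ef n t < n"
  using Iorb_props_conj[OF assms] by auto

theorem family2:
  assumes m: "m \<ge> 3" and n: "n \<ge> 3" and k: "n + 1 \<le> k" "k \<le> (n - 1)^2 + 1"
  shows "\<exists>A. primitive_tensor m n A \<and> primitive_degree m n A = k"
proof -
  have n2: "n \<ge> 2" using n by simp
  define t0 where "t0 = k - 1"
  have t0: "n \<le> t0" "t0 \<le> (n - 1)^2" using k by (auto simp: t0_def)
  define L0 where "L0 = Lf n t0"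
  define e0 where "e0 = Ef n t0"
  have LB: "2 \<le> L0" "L0 \<le> n - 1" "1 \<le> e0" "e0 \<le> n - 1"
    using LE_bounds[OF n t0] by (auto simp: L0_def e0_def)
  have e0n: "e0 < n" using LB n by simp
  have L0n: "L0 - 1 < n" using LB by linarith
  obtain s0 where s0: "s0 < n" "dst n e0 s0 = L0 - 1" using dst_inv[OF L0n e0n] by blast
  define Ob where "Ob = cint n (n - L0) s0"
  define gW where "gW = (\<lambda>x. {Suc x mod n} \<union> (if x = n - 1 then {1::nat} else {}))"
  define G where "G = (\<lambda>x y. gW x \<union> gW y \<union> (if x = e0 \<and> y = s0 then Ob else {}))"
  define Phi where "Phi = (\<lambda>S. Wm n S \<union> (if e0 \<in> S \<and> s0 \<in> S then Ob else {}))"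
  have Osub: "Ob \<subseteq> {..<n}" by (simp add: Ob_def cint_sub)
  have eqG: "{i. i < n \<and> (\<exists>x\<in>S. \<exists>y\<in>S. i \<in> G x y)} = Phi S" for S
  proof (intro equalityI subsetI)
    fix i assume "i \<in> {i. i < n \<and> (\<exists>x\<in>S. \<exists>y\<in>S. i \<in> G x y)}"
    then obtain x y where i: "i < n" "x \<in> S" "y \<in> S" "i \<in> G x y" by blast
    show "i \<in> Phi S"
    proof (cases "i \<in> gW x \<union> gW y")
      case True
      hence "i \<in> Wm n S" using i unfolding gW_def Wm_def by (auto split: if_splits)
      thus ?thesis by (simp add: Phi_def)
    next
      case False
      hence "x = e0 \<and> y = s0 \<and> i \<in> Ob" using i(4) unfolding G_def by (auto split: if_splits)
      thus ?thesis using i by (simp add: Phi_def)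
    qed
  next
    fix i assume "i \<in> Phi S"
    hence "i \<in> Wm n S \<or> (e0 \<in> S \<and> s0 \<in> S \<and> i \<in> Ob)" by (simp add: Phi_def split: if_splits)
    thus "i \<in> {i. i < n \<and> (\<exists>x\<in>S. \<exists>y\<in>S. i \<in> G x y)}"
    proof
      assume "i \<in> Wm n S"
      then obtain x where "i < n" "x \<in> S" "i \<in> gW x" unfolding Wm_def gW_def by auto
      thus ?thesis unfolding G_def by blast
    next
      assume h: "e0 \<in> S \<and> s0 \<in> S \<and> i \<in> Ob"
      hence "i < n" using Osub by auto
      moreover have "i \<in> G e0 s0" using h unfolding G_def by simp
      ultimately show ?thesis using h by blast
    qed
  qed
  have Phib: "Phi S \<subseteq> {..<n}" for S using Osub by (auto simp: Phi_def Wm_def)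
  have Phifull: "Phi {..<n} = {..<n}" using Wm_full[OF n2] Osub by (auto simp: Phi_def)
  have Phifull2: "(Phi ^^ t) {..<n} = {..<n}" for t by (induction t) (simp_all add: Phifull)
  have orbit: "t \<le> t0 \<Longrightarrow> (Phi ^^ t) {0} = Iorb n t" for t
  proof (induction t)
    case 0 then show ?case using Iorb_small[of 0 n] n by simp
  next
    case (Suc t)
    hence tt: "t < t0" by simp
    have prev: "(Phi ^^ t) {0} = Iorb n t" using Suc by simp
    have tq: "t < (n - 1)^2" using tt t0 by simp
    have st: "Wm n (Iorb n t) = Iorb n (Suc t)" using Iorb_step[OF n tq] .
    have IP: "1 \<le> Lf n t" "Lf n t < n" "Ef n t < n" using Iorb_props[OF n] tq by auto
    have extra: "Ob \<subseteq> Wm n (Iorb n t)" if ins: "e0 \<in> Iorb n t" "s0 \<in> Iorb n t"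
    proof -
      have h: "cint n L0 e0 \<subseteq> Iorb n t \<or> Ob \<subseteq> cint n (Lf n t) (Suc (Ef n t) mod n)"
        using harmless[OF n2 e0n s0(1) LB(1,2) s0(2) IP(3) IP(2)] ins
        by (simp add: Iorb_def Ob_def)
      have new: "Lf n t < L0 \<or> (Lf n t = L0 \<and> Ef n t \<noteq> e0)"
        using Iorb_new[OF n tt t0] by (simp add: L0_def e0_def)
      have L'L: "Lf n t \<le> L0" using new by auto
      have L0n': "L0 \<le> n" using LB by linarith
      have new': "Lf n t < L0 \<or> e0 \<noteq> Ef n t" using new by auto
      have "\<not> cint n L0 e0 \<subseteq> Iorb n t"
        unfolding Iorb_def by (rule cint_not_sub[OF e0n IP(3) L'L L0n' IP(1) IP(2) new'])
      hence "Ob \<subseteq> cint n (Lf n t) (Suc (Ef n t) mod n)" using h by blast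
      also have "\<dots> = (\<lambda>x. Suc x mod n) ` Iorb n t"
        using cint_shift[of n "Ef n t" "Lf n t"] IP n by (simp add: Iorb_def)
      also have "\<dots> \<subseteq> Wm n (Iorb n t)" by (rule Wm_shift) (simp add: Iorb_def cint_sub)
      finally show ?thesis .
    qed
    have "Phi (Iorb n t) = Iorb n (Suc t)"
      using extra st by (auto simp: Phi_def)
    thus ?case using prev by simp
  qed
  have fullk: "(Phi ^^ k) {0} = {..<n}"
  proof -
    have kk: "k = Suc t0" using k by (simp add: t0_def)
    have I0: "(Phi ^^ t0) {0} = cint n L0 e0" using orbit[of t0] by (simp add: Iorb_def L0_def e0_def)
    have ein: "e0 \<in> cint n L0 e0" using cint_dst[OF e0n, of e0 L0] e0n LB by (simp add: dst_self)
    have sin: "s0 \<in> cint n L0 e0" using cint_dst[OF e0n, of s0 L0] s0 LB by simp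
    have "cint n L0 (Suc e0 mod n) \<subseteq> Wm n (cint n L0 e0)"
      using cint_shift[of n e0 L0] Wm_shift[OF cint_sub, of n L0 e0] n e0n by simp
    hence "cint n L0 (Suc e0 mod n) \<union> Ob \<subseteq> Phi (cint n L0 e0)" using ein sin by (auto simp: Phi_def)
    hence "{..<n} \<subseteq> Phi (cint n L0 e0)" using trigger_full[OF n2 e0n s0(1) LB(1,2) s0(2)]
      by (simp add: Ob_def)
    thus ?thesis using I0 kk Phib by auto
  qed
  let ?A = "pairT G"
  have eq: "suppF m n ?A S = Phi S" if "S \<subseteq> {..<n}" for S
    using suppF_pairT[OF m that] eqG by simp
  have it: "(suppF m n ?A ^^ t) {j} = (Phi ^^ t) {j}" if "j < n" for t j
    using that by (intro funpow_cong_sub[of n]) (auto simp: eq Phib)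
  have "primitive_tensor m n ?A \<and> primitive_degree m n ?A = k"
  proof (rule degree_exact[OF pairT_nonneg, where jw = 0])
    show "2 \<le> m" using m by simp
    show "1 \<le> k" using k by simp
    show "0 < n" using n by simp
    show "(suppF m n ?A ^^ k) {j} = {..<n}" if j: "j < n" for j
    proof -
      have "(Phi ^^ j) {0} = {j}" using orbit[of j] Iorb_small[OF j] j t0 by simp
      hence "(Phi ^^ k) {j} = (Phi ^^ (k + j)) {0}" by (simp add: funpow_add)
      also have "\<dots> = (Phi ^^ j) ((Phi ^^ k) {0})" by (simp add: funpow_add add.commute)
      also have "\<dots> = {..<n}" using fullk Phifull2 by simp
      finally show ?thesis using it[OF j] by simp
    qed
    show "(suppF m n ?A ^^ r) {0} \<noteq> {..<n}" if r: "r < k" for r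
    proof -
      have rt: "r \<le> t0" using r by (simp add: t0_def)
      have "(Phi ^^ r) {0} = Iorb n r" using orbit[OF rt] .
      moreover have "Iorb n r \<noteq> {..<n}"
        using cint_not_full[of "Ef n r" n "Lf n r"] Iorb_props[OF n, of r] rt t0 by (simp add: Iorb_def)
      ultimately show ?thesis using it[of 0 r] n by simp
    qed
  qed
  thus ?thesis by blast
qed

theorem theorem3p4:
  fixes m n :: nat
  assumes "m \<ge> 3" and "n \<ge> 2"
  shows "E_set m n = {1..(n - 1)^2 + 1}"
proof (intro equalityI subsetI)
  fix k assume "k \<in> E_set m n"
  then obtain A where "primitive_tensor m n A" "primitive_degree m n A = k"
    unfolding E_set_def by blast
  thus "k \<in> {1..(n - 1)^2 + 1}" using degree_upper[OF assms] by blast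
next
  fix k assume k: "k \<in> {1..(n - 1)^2 + 1}"
  have "\<exists>A. primitive_tensor m n A \<and> primitive_degree m n A = k"
  proof (cases "k \<le> n")
    case True
    thus ?thesis using family1[OF assms] k by simp
  next
    case False
    have n3: "n \<ge> 3"
    proof (rule ccontr)
      assume "\<not> n \<ge> 3"
      hence "n = 2" using assms by simp
      thus False using k False by simp
    qed
    thus ?thesis using family2[OF assms(1) n3] k False by simp
  qed
  thus "k \<in> E_set m n" unfolding E_set_def by blast
qed

end
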